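(* Let $k\subset K$ be differential fields of characteristic zero with the same field of constants $C$, assumed algebraically closed, and assume there is $x\in k$ with $x'=1$. Let $f,g\in K$ be iterated integrals over $k$. If $f$ and $g$ are algebraically dependent over $k$, then there exist $u,v\in k$, not both zero, such that $uf+vg\in k$.
   Context: An element $f\in K$ is an iterated integral over $k$ if $f^{(m)}\in k$ for some $m\in\mathbb{N}$. Here $k$ need not be algebraically closed. *)

theory Defs
  imports "HOL-Computational_Algebra.Polynomial"
begin

text \<open>A derivation on a field (the ambient differential field K is the whole type).\<close>
definition derivation :: "('a::field \<Rightarrow> 'a) \<Rightarrow> bool" where
  "derivation D \<longleftrightarrow> (\<forall>a b. D (a + b) = D a + D b) \<and> (\<forall>a b. D (a * b) = D a * b + a * D b)"

definition diff_subfield :: "('a::field \<Rightarrow> 'a) \<Rightarrow> 'a set \<Rightarrow> bool" where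
  "diff_subfield D k \<longleftrightarrow> 0 \<in> k \<and> 1 \<in> k \<and>
     (\<forall>a\<in>k. \<forall>b\<in>k. a + b \<in> k \<and> a * b \<in> k) \<and>
     (\<forall>a\<in>k. - a \<in> k \<and> inverse a \<in> k) \<and> (\<forall>a\<in>k. D a \<in> k)"

definition constants :: "('a \<Rightarrow> 'a::field) \<Rightarrow> 'a set" where
  "constants D = {c. D c = 0}"

definition alg_closed_set :: "'a::field set \<Rightarrow> bool" where
  "alg_closed_set C \<longleftrightarrow> (\<forall>p::'a poly. degree p > 0 \<and> (\<forall>i. coeff p i \<in> C) \<longrightarrow> (\<exists>c\<in>C. poly p c = 0))"

definition iterated_integral :: "('a \<Rightarrow> 'a) \<Rightarrow> 'a set \<Rightarrow> 'a \<Rightarrow> bool" where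
  "iterated_integral D k f \<longleftrightarrow> (\<exists>m::nat. (D ^^ m) f \<in> k)"

text \<open>P is encoded as a polynomial in X whose
  coefficients are polynomials in Y.\<close>
definition alg_dependent :: "'a::comm_ring_1 set \<Rightarrow> 'a \<Rightarrow> 'a \<Rightarrow> bool" where
  "alg_dependent k f g \<longleftrightarrow> (\<exists>P :: 'a poly poly. P \<noteq> 0 \<and> (\<forall>i j. coeff (coeff P i) j \<in> k) \<and>
      poly (map_poly (\<lambda>q. poly q g) P) f = 0)"

end

theory Submission
  imports Defs
begin

definition Lpoly :: "'a::comm_ring_1 set \<Rightarrow> 'a poly \<Rightarrow> bool" where
  "Lpoly L p \<longleftrightarrow> (\<forall>i. coeff p i \<in> L)"

definition alg_over :: "'a::comm_ring_1 set \<Rightarrow> 'a \<Rightarrow> bool" where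
  "alg_over L y \<longleftrightarrow> (\<exists>p. p \<noteq> 0 \<and> Lpoly L p \<and> poly p y = 0)"

definition ratfield :: "'a::field set \<Rightarrow> 'a \<Rightarrow> 'a set" where
  "ratfield L s = {poly p s / poly q s | p q. Lpoly L p \<and> Lpoly L q \<and> poly q s \<noteq> 0}"

definition Dp :: "('a::field \<Rightarrow> 'a) \<Rightarrow> 'a \<Rightarrow> 'a poly \<Rightarrow> 'a poly" where
  "Dp D a p = map_poly D p + smult a (pderiv p)"

lemma sf_0: "diff_subfield D L \<Longrightarrow> 0 \<in> L" by (simp add: diff_subfield_def)
lemma sf_1: "diff_subfield D L \<Longrightarrow> 1 \<in> L" by (simp add: diff_subfield_def)
lemma sf_add: "diff_subfield D L \<Longrightarrow> a \<in> L \<Longrightarrow> b \<in> L \<Longrightarrow> a + b \<in> L" by (simp add: diff_subfield_def)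
lemma sf_mult: "diff_subfield D L \<Longrightarrow> a \<in> L \<Longrightarrow> b \<in> L \<Longrightarrow> a * b \<in> L" by (simp add: diff_subfield_def)
lemma sf_uminus: "diff_subfield D L \<Longrightarrow> a \<in> L \<Longrightarrow> - a \<in> L" by (simp add: diff_subfield_def)
lemma sf_inverse: "diff_subfield D L \<Longrightarrow> a \<in> L \<Longrightarrow> inverse a \<in> L" by (simp add: diff_subfield_def)
lemma sf_D: "diff_subfield D L \<Longrightarrow> a \<in> L \<Longrightarrow> D a \<in> L" by (simp add: diff_subfield_def)
lemma sf_diff: "diff_subfield D L \<Longrightarrow> a \<in> L \<Longrightarrow> b \<in> L \<Longrightarrow> a - b \<in> L"
  using sf_add[of D L a "-b"] sf_uminus[of D L b] by simp
lemma sf_divide: "diff_subfield D L \<Longrightarrow> a \<in> L \<Longrightarrow> b \<in> L \<Longrightarrow> a / b \<in> L"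
  using sf_mult[of D L a "inverse b"] sf_inverse[of D L b] by (simp add: divide_inverse)
lemma sf_of_nat: "diff_subfield D L \<Longrightarrow> of_nat n \<in> L"
  by (induction n) (auto intro: sf_add sf_0 sf_1)
lemma sf_power: "diff_subfield D L \<Longrightarrow> a \<in> L \<Longrightarrow> a ^ n \<in> L"
  by (induction n) (auto intro: sf_mult sf_1)
lemma sf_sum: "diff_subfield D L \<Longrightarrow> (\<And>i. i \<in> A \<Longrightarrow> f i \<in> L) \<Longrightarrow> sum f A \<in> L"
  by (induction A rule: infinite_finite_induct) (auto intro: sf_add sf_0)
lemma sf_funpow: "diff_subfield D L \<Longrightarrow> a \<in> L \<Longrightarrow> (D ^^ n) a \<in> L"
  by (induction n) (auto intro: sf_D)

locale der =
  fixes D :: "'a::field_char_0 \<Rightarrow> 'a"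
  assumes der: "derivation D"
begin

lemma D_add: "D (a + b) = D a + D b" using der by (simp add: derivation_def)
lemma D_mult: "D (a * b) = D a * b + a * D b" using der by (simp add: derivation_def)
lemma D_0: "D 0 = 0" using D_add[of 0 0] by simp
lemma D_1: "D 1 = 0" using D_mult[of 1 1] by simp
lemma D_uminus: "D (- a) = - D a" using D_add[of a "-a"] D_0 by (simp add: add_eq_0_iff)
lemma D_diff: "D (a - b) = D a - D b" using D_add[of a "-b"] D_uminus[of b] by simp
lemma D_of_nat: "D (of_nat n) = 0" by (induction n) (simp_all add: D_0 D_add D_1)
lemma D_of_nat_mult: "D (of_nat n * a) = of_nat n * D a" by (simp add: D_mult D_of_nat)
lemma D_const_mult: "D c = 0 \<Longrightarrow> D (c * a) = c * D a" by (simp add: D_mult)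
lemma D_sum: "D (sum f A) = (\<Sum>i\<in>A. D (f i))"
  by (induction A rule: infinite_finite_induct) (simp_all add: D_0 D_add)
lemma D_power: "D (a ^ Suc n) = of_nat (Suc n) * a ^ n * D a"
  by (induction n) (simp_all add: D_mult algebra_simps)
lemma D_divide: assumes "b \<noteq> 0" shows "D (a / b) = (D a * b - a * D b) / b^2"
proof -
  have "D a = D (a / b * b)" using assms by simp
  also have "\<dots> = D (a/b) * b + a / b * D b" by (rule D_mult)
  finally show ?thesis using assms by (simp add: field_simps power2_eq_square)
qed
lemma D_div_nat: "n \<noteq> 0 \<Longrightarrow> D (a / of_nat n) = D a / of_nat n"
  using D_divide[of "of_nat n" a] by (simp add: D_of_nat power2_eq_square)

lemma D_funpow_add: "(D ^^ n) (a + b) = (D ^^ n) a + (D ^^ n) b"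
  by (induction n) (simp_all add: D_add)
lemma D_funpow_uminus: "(D ^^ n) (- a) = - (D ^^ n) a"
  by (induction n) (simp_all add: D_uminus)
lemma D_funpow_0: "(D ^^ n) 0 = 0"
  by (induction n) (simp_all add: D_0)

end


context
  fixes D :: "'a::field_char_0 \<Rightarrow> 'a" and L :: "'a set"
  assumes sf: "diff_subfield D L"
begin

lemma Lpoly_0[simp]: "Lpoly L 0" using sf_0[OF sf] by (simp add: Lpoly_def)
lemma Lpoly_const: "c \<in> L \<Longrightarrow> Lpoly L [:c:]"
  using sf_0[OF sf] by (simp add: Lpoly_def coeff_pCons split: nat.splits)
lemma Lpoly_1[simp]: "Lpoly L 1" using Lpoly_const[OF sf_1[OF sf]] by (simp add: one_pCons)
lemma Lpoly_pCons: "c \<in> L \<Longrightarrow> Lpoly L p \<Longrightarrow> Lpoly L (pCons c p)"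
  by (simp add: Lpoly_def coeff_pCons split: nat.splits)
lemma Lpoly_pCons_iff: "Lpoly L (pCons c p) \<longleftrightarrow> c \<in> L \<and> Lpoly L p"
  by (auto simp: Lpoly_def coeff_pCons split: nat.splits)
lemma Lpoly_add: "Lpoly L p \<Longrightarrow> Lpoly L q \<Longrightarrow> Lpoly L (p + q)"
  using sf_add[OF sf] by (simp add: Lpoly_def)
lemma Lpoly_uminus: "Lpoly L p \<Longrightarrow> Lpoly L (- p)"
  using sf_uminus[OF sf] by (simp add: Lpoly_def)
lemma Lpoly_diff: "Lpoly L p \<Longrightarrow> Lpoly L q \<Longrightarrow> Lpoly L (p - q)"
  using sf_diff[OF sf] by (simp add: Lpoly_def)
lemma Lpoly_smult: "c \<in> L \<Longrightarrow> Lpoly L p \<Longrightarrow> Lpoly L (smult c p)"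
  using sf_mult[OF sf] by (simp add: Lpoly_def)
lemma Lpoly_mult: "Lpoly L p \<Longrightarrow> Lpoly L q \<Longrightarrow> Lpoly L (p * q)"
  unfolding Lpoly_def coeff_mult by (auto intro!: sf_sum[OF sf] sf_mult[OF sf])
lemma Lpoly_power: "Lpoly L p \<Longrightarrow> Lpoly L (p ^ n)"
  by (induction n) (auto intro: Lpoly_mult)
lemma Lpoly_pderiv: "Lpoly L p \<Longrightarrow> Lpoly L (pderiv p)"
  using sf_of_nat[OF sf] sf_mult[OF sf] by (simp add: Lpoly_def coeff_pderiv del: of_nat_Suc)
lemma Lpoly_pcompose: "Lpoly L p \<Longrightarrow> Lpoly L q \<Longrightarrow> Lpoly L (pcompose p q)"
proof (induction p rule: pCons_induct)
  case 0 then show ?case by simp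
next
  case (pCons a p)
  then show ?case by (auto simp: pcompose_pCons Lpoly_pCons_iff intro!: Lpoly_add Lpoly_mult Lpoly_const)
qed
lemma Lpoly_poly: "Lpoly L p \<Longrightarrow> z \<in> L \<Longrightarrow> poly p z \<in> L"
proof (induction p rule: pCons_induct)
  case 0 then show ?case using sf_0[OF sf] by simp
next
  case (pCons a p)
  then show ?case by (auto simp: Lpoly_pCons_iff intro!: sf_add[OF sf] sf_mult[OF sf])
qed
lemma Lpoly_mapD: "D 0 = 0 \<Longrightarrow> Lpoly L p \<Longrightarrow> Lpoly L (map_poly D p)"
  using sf_D[OF sf] by (simp add: Lpoly_def coeff_map_poly)
lemma Lpoly_Dp: "D 0 = 0 \<Longrightarrow> a \<in> L \<Longrightarrow> Lpoly L p \<Longrightarrow> Lpoly L (Dp D a p)"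
  unfolding Dp_def by (intro Lpoly_add Lpoly_mapD Lpoly_smult Lpoly_pderiv)

lemma Lpoly2_poly:
  fixes Q :: "'a poly poly"
  assumes "\<And>i. Lpoly L (coeff Q i)" "Lpoly L A"
  shows "Lpoly L (poly Q A)"
  using assms
proof (induction Q rule: pCons_induct)
  case 0 then show ?case by simp
next
  case (pCons a Q)
  have "Lpoly L a" using pCons.prems(1)[of 0] by simp
  moreover have "Lpoly L (coeff Q i)" for i using pCons.prems(1)[of "Suc i"] by simp
  ultimately show ?case using pCons by (auto intro!: Lpoly_add Lpoly_mult)
qed

end

context der
begin

lemma D_poly: "D (poly p z) = poly (map_poly D p) z + D z * poly (pderiv p) z"
proof (induction p rule: pCons_induct)
  case 0 then show ?case by (simp add: D_0)
next
  case (pCons a p)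
  show ?case using pCons
    by (simp add: map_poly_pCons D_0 pderiv_pCons D_add D_mult algebra_simps)
qed

lemma D_poly_Dp: "D (poly p z) = poly (Dp D (D z) p) z"
  by (simp add: D_poly Dp_def)

end


section \<open>Simple transcendental extensions\<close>

locale dsub = der D for D :: "'a::field_char_0 \<Rightarrow> 'a" +
  fixes L :: "'a set"
  assumes sf: "diff_subfield D L"
begin

lemma rf_L: "c \<in> L \<Longrightarrow> c \<in> ratfield L s"
  unfolding ratfield_def
  by (rule CollectI, rule exI[of _ "[:c:]"], rule exI[of _ 1]) (simp add: Lpoly_const[OF sf] Lpoly_1[OF sf])

lemma rf_s: "s \<in> ratfield L s"
  unfolding ratfield_def
  by (rule CollectI, rule exI[of _ "[:0,1:]"], rule exI[of _ 1])
     (simp add: Lpoly_pCons[OF sf sf_0[OF sf] Lpoly_const[OF sf sf_1[OF sf]]] Lpoly_1[OF sf])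

lemma rf_elim:
  assumes "a \<in> ratfield L s"
  obtains p q where "Lpoly L p" "Lpoly L q" "poly q s \<noteq> 0" "a = poly p s / poly q s"
  using assms unfolding ratfield_def by blast

lemma rf_intro:
  "Lpoly L p \<Longrightarrow> Lpoly L q \<Longrightarrow> poly q s \<noteq> 0 \<Longrightarrow> poly p s / poly q s \<in> ratfield L s"
  unfolding ratfield_def by blast

lemma rf_sf:
  assumes Ds: "D s \<in> L"
  shows "diff_subfield D (ratfield L s)"
proof -
  have add: "a + b \<in> ratfield L s" and mult: "a * b \<in> ratfield L s"
    if ab: "a \<in> ratfield L s" "b \<in> ratfield L s" for a b
  proof -
    obtain p1 q1 where 1: "Lpoly L p1" "Lpoly L q1" "poly q1 s \<noteq> 0" "a = poly p1 s / poly q1 s"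
      using ab(1) by (rule rf_elim)
    obtain p2 q2 where 2: "Lpoly L p2" "Lpoly L q2" "poly q2 s \<noteq> 0" "b = poly p2 s / poly q2 s"
      using ab(2) by (rule rf_elim)
    have "a + b = poly (p1 * q2 + p2 * q1) s / poly (q1 * q2) s"
      using 1(3) 2(3) unfolding 1(4) 2(4) by (simp add: field_simps)
    moreover have "Lpoly L (p1 * q2 + p2 * q1)" "Lpoly L (q1 * q2)" "poly (q1 * q2) s \<noteq> 0"
      using 1 2 by (auto intro!: Lpoly_add[OF sf] Lpoly_mult[OF sf])
    ultimately show "a + b \<in> ratfield L s" by (metis rf_intro)
    have "a * b = poly (p1 * p2) s / poly (q1 * q2) s"
      using 1(3) 2(3) unfolding 1(4) 2(4) by (simp add: field_simps)
    moreover have "Lpoly L (p1 * p2)" using 1 2 by (auto intro!: Lpoly_mult[OF sf])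
    ultimately show "a * b \<in> ratfield L s" using \<open>Lpoly L (q1 * q2)\<close> \<open>poly (q1 * q2) s \<noteq> 0\<close>
      by (metis rf_intro)
  qed
  have neg: "- a \<in> ratfield L s" and inv: "inverse a \<in> ratfield L s" and der: "D a \<in> ratfield L s"
    if ab: "a \<in> ratfield L s" for a
  proof -
    obtain p1 q1 where 1: "Lpoly L p1" "Lpoly L q1" "poly q1 s \<noteq> 0" "a = poly p1 s / poly q1 s"
      using ab(1) by (rule rf_elim)
    have "- a = poly (- p1) s / poly q1 s" using 1 by simp
    then show "- a \<in> ratfield L s" using 1 rf_intro[OF Lpoly_uminus[OF sf 1(1)] 1(2,3)] by metis
    show "inverse a \<in> ratfield L s"
    proof (cases "poly p1 s = 0")
      case True
      then show ?thesis using 1 rf_L[OF sf_0[OF sf]] by simp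
    next
      case False
      then have "inverse a = poly q1 s / poly p1 s" using 1 by simp
      then show ?thesis using 1 False rf_intro[of q1 p1 s] by metis
    qed
    have "D a = (poly (Dp D (D s) p1) s * poly q1 s - poly p1 s * poly (Dp D (D s) q1) s) / (poly q1 s)^2"
      unfolding 1(4) D_divide[OF 1(3)] D_poly_Dp ..
    also have "\<dots> = poly (Dp D (D s) p1 * q1 - p1 * Dp D (D s) q1) s / poly (q1^2) s"
      by simp
    finally have eq: "D a = poly (Dp D (D s) p1 * q1 - p1 * Dp D (D s) q1) s / poly (q1^2) s" .
    have "Lpoly L (Dp D (D s) p1 * q1 - p1 * Dp D (D s) q1)" "Lpoly L (q1^2)" "poly (q1^2) s \<noteq> 0"
      using 1 Ds Lpoly_Dp[OF sf D_0 Ds]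
      by (simp_all add: Lpoly_diff[OF sf] Lpoly_mult[OF sf] Lpoly_power[OF sf])
    then show "D a \<in> ratfield L s" unfolding eq by (rule rf_intro)
  qed
  show ?thesis unfolding diff_subfield_def
    using rf_L[OF sf_0[OF sf]] rf_L[OF sf_1[OF sf]]
    by (intro conjI ballI add mult neg inv der) auto
qed

lemma rf_sub:
  assumes "s \<in> L" shows "ratfield L s \<subseteq> L"
proof
  fix a assume "a \<in> ratfield L s"
  then obtain p q where 1: "Lpoly L p" "Lpoly L q" "poly q s \<noteq> 0" "a = poly p s / poly q s"
    by (rule rf_elim)
  then show "a \<in> L" using assms by (auto intro!: sf_divide[OF sf] Lpoly_poly[OF sf])
qed

lemma rf_mono: "L \<subseteq> ratfield L s" using rf_L by blast

end


context der
begin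

lemma coeff_Dp: "coeff (Dp D a q) i = D (coeff q i) + a * coeff (pderiv q) i"
  by (simp add: Dp_def coeff_map_poly D_0)

lemma Dp_monic_degree:
  assumes "lead_coeff q = 1" "degree q \<ge> 1" "Dp D a q \<noteq> 0"
  shows "degree (Dp D a q) < degree q"
proof -
  have "coeff (Dp D a q) i = 0" if "i > degree q - 1" for i
  proof -
    have ge: "i \<ge> degree q" using that assms(2) by simp
    have "coeff q i = (if i = degree q then 1 else 0)"
      using assms(1) ge by (auto simp: coeff_eq_0)
    then have "D (coeff q i) = 0" by (simp add: D_0 D_1)
    moreover have "coeff (pderiv q) i = 0" using ge by (simp add: coeff_pderiv coeff_eq_0)
    ultimately show ?thesis by (simp add: coeff_Dp)
  qed
  then have "degree (Dp D a q) \<le> degree q - 1" by (intro degree_le) auto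
  then show ?thesis using assms(2) by simp
qed

lemma Dp_monic_zero:
  assumes "lead_coeff q = 1" "degree q \<ge> 1" "Dp D a q = 0" "D t = a"
  shows "D (t + coeff q (degree q - 1) / of_nat (degree q)) = 0"
proof -
  define n where "n = degree q"
  have n: "n \<ge> 1" "Suc (n - 1) = n" using assms(2) by (auto simp: n_def)
  have "coeff (Dp D a q) (n - 1) = 0" using assms(3) by simp
  then have "D (coeff q (n-1)) + a * (of_nat n * 1) = 0"
    using assms(1) n by (simp add: coeff_Dp coeff_pderiv n_def del: of_nat_Suc)
  then have "D (coeff q (n-1)) = - a * of_nat n" by (simp add: algebra_simps add_eq_0_iff)
  moreover have "of_nat n \<noteq> (0::'a)" using n by simp
  ultimately show ?thesis using n assms(4)
    by (simp add: D_add D_div_nat n_def[symmetric])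
qed

lemma key_monic:
  assumes sf: "diff_subfield D L" and C: "constants D \<subseteq> L"
    and q: "Lpoly L q" "lead_coeff q = 1" "degree q \<ge> 1" "Dp D a q = 0" "D t = a"
  shows "t \<in> L"
proof -
  define c where "c = coeff q (degree q - 1) / of_nat (degree q)"
  have "t + c \<in> constants D" using Dp_monic_zero[OF q(2-5)] by (simp add: constants_def c_def)
  then have tc: "t + c \<in> L" using C by blast
  have cL: "c \<in> L" unfolding c_def using q(1) sf
    by (auto simp: Lpoly_def intro!: sf_divide sf_of_nat)
  have "(t + c) - c \<in> L" using sf_diff[OF sf tc cL] .
  then show ?thesis by simp
qed

lemma normalize_Lpoly:
  assumes sf: "diff_subfield D L" and "Lpoly L p" "p \<noteq> 0"
  shows "Lpoly L (smult (inverse (lead_coeff p)) p)" "lead_coeff (smult (inverse (lead_coeff p)) p) = 1"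
    "degree (smult (inverse (lead_coeff p)) p) = degree p"
proof -
  have "lead_coeff p \<in> L" using assms(2) by (simp add: Lpoly_def)
  then have "inverse (lead_coeff p) \<in> L" by (rule sf_inverse[OF sf])
  then show "Lpoly L (smult (inverse (lead_coeff p)) p)" using Lpoly_smult[OF sf _ assms(2)] by blast
  show "lead_coeff (smult (inverse (lead_coeff p)) p) = 1" "degree (smult (inverse (lead_coeff p)) p) = degree p"
    using assms(3) by auto
qed

lemma monic_deg0: "lead_coeff q = 1 \<Longrightarrow> degree q = 0 \<Longrightarrow> q = 1"
  by (elim degree_eq_zeroE) (simp add: one_pCons)

lemma lemmaA:
  assumes sf: "diff_subfield D L" and C: "constants D \<subseteq> L"
    and Dy: "D y \<in> L" and alg: "alg_over L y"
  shows "y \<in> L"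
proof -
  let ?P = "\<lambda>p. p \<noteq> 0 \<and> Lpoly L p \<and> poly p y = 0"
  obtain p0 where "?P p0" using alg by (auto simp: alg_over_def)
  then obtain p where p: "?P p" and min: "\<And>q. ?P q \<Longrightarrow> degree p \<le> degree q"
    using ex_has_least_nat[of ?P p0 degree] by blast
  define q where "q = smult (inverse (lead_coeff p)) p"
  have q: "Lpoly L q" "lead_coeff q = 1" "degree q = degree p"
    using normalize_Lpoly[OF sf, of p] p by (auto simp: q_def)
  have q0: "poly q y = 0" using p by (simp add: q_def)
  have dq: "degree q \<ge> 1"
  proof (rule ccontr)
    assume "\<not> degree q \<ge> 1"
    then have "degree q = 0" by simp
    then have "q = 1" using q(2) monic_deg0 by blast
    then show False using q0 by simp
  qed
  have z: "Dp D (D y) q = 0"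
  proof (rule ccontr)
    assume nz: "Dp D (D y) q \<noteq> 0"
    have "poly (Dp D (D y) q) y = 0" using q0 D_poly_Dp[of q y] by (simp add: D_0)
    moreover have "Lpoly L (Dp D (D y) q)" using Lpoly_Dp[OF sf D_0 Dy q(1)] .
    ultimately have "degree p \<le> degree (Dp D (D y) q)" using nz min by blast
    moreover have "degree (Dp D (D y) q) < degree q" using Dp_monic_degree[OF q(2) dq nz] .
    ultimately show False using q(3) by simp
  qed
  show ?thesis using key_monic[OF sf C q(1,2) dq z refl] .
qed

end


section \<open>Transcendental integrals\<close>

context der
begin

lemma transc:
  assumes sf: "diff_subfield D L" and C: "constants D \<subseteq> L"
    and t: "t \<notin> L" "D t \<in> L" and p: "Lpoly L p" "poly p t = 0"
  shows "p = 0"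
  using lemmaA[OF sf C t(2)] t(1) p unfolding alg_over_def by blast

lemma transc_eq:
  assumes sf: "diff_subfield D L" and C: "constants D \<subseteq> L"
    and t: "t \<notin> L" "D t \<in> L" and p: "Lpoly L p" "Lpoly L q" "poly p t = poly q t"
  shows "p = q"
  using transc[OF sf C t, of "p - q"] p Lpoly_diff[OF sf] by auto

lemma PL:
  assumes sf: "diff_subfield D L" and C: "constants D \<subseteq> L"
    and t: "t \<notin> L" "D t \<in> L" and z: "z \<in> ratfield L t"
    and r: "Lpoly L r" "D z = poly r t"
  shows "\<exists>p. Lpoly L p \<and> z = poly p t"
proof -
  interpret dsub D L by unfold_locales (rule sf)
  let ?P = "\<lambda>q. q \<noteq> 0 \<and> Lpoly L q \<and> (\<exists>p. Lpoly L p \<and> poly q t * z = poly p t)"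
  obtain p0 q0 where pq0: "Lpoly L p0" "Lpoly L q0" "poly q0 t \<noteq> 0" "z = poly p0 t / poly q0 t"
    using z by (rule rf_elim)
  have "?P q0" using pq0 by (intro conjI exI[of _ p0]) auto
  then obtain q where qP: "?P q" and min: "\<And>q'. ?P q' \<Longrightarrow> degree q \<le> degree q'"
    using ex_has_least_nat[of ?P q0 degree] by blast
  then obtain p where p: "Lpoly L p" "poly q t * z = poly p t" by blast
  define qn where "qn = smult (inverse (lead_coeff q)) q"
  define pn where "pn = smult (inverse (lead_coeff q)) p"
  have qn: "Lpoly L qn" "lead_coeff qn = 1" "degree qn = degree q"
    using normalize_Lpoly[OF sf, of q] qP by (auto simp: qn_def)
  have lcL: "inverse (lead_coeff q) \<in> L" using qP sf by (auto simp: Lpoly_def intro: sf_inverse)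
  have pn: "Lpoly L pn" unfolding pn_def by (rule Lpoly_smult[OF sf lcL p(1)])
  have eq: "poly qn t * z = poly pn t" using p(2) by (simp add: qn_def pn_def mult.assoc)
  show ?thesis
  proof (cases "degree qn = 0")
    case True
    then have "qn = 1" using qn(2) monic_deg0[of qn] by simp
    then show ?thesis using eq pn by auto
  next
    case False
    then have dq: "degree qn \<ge> 1" by simp
    have z0: "Dp D (D t) qn = 0"
    proof (rule ccontr)
      assume nz: "Dp D (D t) qn \<noteq> 0"
      have "D (poly qn t * z) = D (poly pn t)" using eq by simp
      then have "poly (Dp D (D t) qn) t * z + poly qn t * poly r t = poly (Dp D (D t) pn) t"
        using r(2) by (simp add: D_mult D_poly_Dp)
      then have "poly (Dp D (D t) qn) t * z = poly (Dp D (D t) pn - qn * r) t"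
        by (simp add: algebra_simps)
      moreover have "Lpoly L (Dp D (D t) pn - qn * r)"
        using Lpoly_Dp[OF sf D_0 t(2) pn] qn(1) r(1) by (simp add: Lpoly_diff[OF sf] Lpoly_mult[OF sf])
      moreover have "Lpoly L (Dp D (D t) qn)" using Lpoly_Dp[OF sf D_0 t(2) qn(1)] .
      ultimately have "?P (Dp D (D t) qn)" using nz by blast
      then have "degree q \<le> degree (Dp D (D t) qn)" by (rule min)
      moreover have "degree (Dp D (D t) qn) < degree qn" using Dp_monic_degree[OF qn(2) dq nz] .
      ultimately show False using qn(3) by simp
    qed
    have "t \<in> L" using key_monic[OF sf C qn(1,2) dq z0 refl] .
    then show ?thesis using t(1) by simp
  qed
qed

lemma polys_down:
  assumes sf: "diff_subfield D L" and C: "constants D \<subseteq> L"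
    and t: "t \<notin> L" "D t \<in> L" and y: "y \<in> ratfield L t" and yM: "(D ^^ M) y \<in> L"
  shows "\<exists>p. Lpoly L p \<and> y = poly p t"
proof -
  interpret dsub D L by unfold_locales (rule sf)
  have sf2: "diff_subfield D (ratfield L t)" by (rule rf_sf[OF t(2)])
  have "\<exists>p. Lpoly L p \<and> (D ^^ (M - j)) y = poly p t" if "j \<le> M" for j
    using that
  proof (induction j)
    case 0
    then show ?case using yM Lpoly_const[OF sf] by (intro exI[of _ "[:(D ^^ M) y:]"]) auto
  next
    case (Suc j)
    then obtain r where r: "Lpoly L r" "(D ^^ (M - j)) y = poly r t" by auto
    have M: "M - j = Suc (M - Suc j)" using Suc.prems by simp
    have w: "(D ^^ (M - Suc j)) y \<in> ratfield L t" using sf_funpow[OF sf2 y] .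
    have "D ((D ^^ (M - Suc j)) y) = poly r t" using r(2) M by simp
    then show ?case using PL[OF sf C t w r(1)] by blast
  qed
  from this[of M] show ?thesis by simp
qed

lemma const_poly_x:
  assumes Dx: "D x = 1" and M: "(D ^^ M) c = 0"
  shows "\<exists>cs. (\<forall>i. D (cs i) = 0) \<and> c = (\<Sum>i<M. cs i * x ^ i)"
  using M
proof (induction M arbitrary: c)
  case 0 then show ?case using D_0 by (intro exI[of _ "\<lambda>_. 0"]) simp
next
  case (Suc M)
  have "(D ^^ M) (D c) = 0" using Suc.prems by (simp add: funpow_Suc_right del: funpow.simps)
  then obtain cs where cs: "\<forall>i. D (cs i) = 0" "D c = (\<Sum>i<M. cs i * x ^ i)" using Suc.IH by blast
  define z where "z = (\<Sum>i<M. (cs i / of_nat (Suc i)) * x ^ Suc i)"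
  have Dterm: "D ((cs i / of_nat (Suc i)) * x ^ Suc i) = cs i * x ^ i" for i
  proof -
    have "D (cs i / of_nat (Suc i)) = 0" using cs(1) D_div_nat[of "Suc i" "cs i"] by simp
    then have A: "D ((cs i / of_nat (Suc i)) * x ^ Suc i) = (cs i / of_nat (Suc i)) * D (x ^ Suc i)"
      by (rule D_const_mult)
    have B: "D (x ^ Suc i) = of_nat (Suc i) * x ^ i" by (simp only: D_power Dx mult_1_right)
    show ?thesis unfolding A B by (simp del: of_nat_Suc)
  qed
  have Dz: "D z = D c" unfolding z_def D_sum Dterm cs(2) ..
  define e where "e = c - z"
  have De: "D e = 0" using Dz by (simp add: e_def D_diff)
  define cs' where "cs' = (\<lambda>i. if i = 0 then e else cs (i - 1) / of_nat i)"
  have "\<forall>i. D (cs' i) = 0" using De cs(1) D_div_nat by (simp add: cs'_def)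
  moreover have "c = (\<Sum>i<Suc M. cs' i * x ^ i)"
  proof -
    have zz: "z = (\<Sum>i<M. cs' (Suc i) * x ^ Suc i)" unfolding z_def cs'_def by simp
    show ?thesis unfolding sum.lessThan_Suc_shift zz[symmetric] by (simp add: cs'_def e_def)
  qed
  ultimately show ?case by blast
qed

lemma const_poly_in:
  assumes sf: "diff_subfield D L" and C: "constants D \<subseteq> L" and x: "x \<in> L" "D x = 1"
    and M: "(D ^^ M) c = 0"
  shows "c \<in> L"
proof -
  obtain cs where cs: "\<forall>i. D (cs i) = 0" "c = (\<Sum>i<M. cs i * x ^ i)"
    using const_poly_x[OF x(2) M] by blast
  have "cs i \<in> L" for i using cs(1) C by (auto simp: constants_def)
  then show ?thesis unfolding cs(2) using x(1) by (auto intro!: sf_sum[OF sf] sf_mult[OF sf] sf_power[OF sf])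
qed

end


section \<open>Iterated integrals in a simple transcendental extension\<close>

context der
begin

lemma pderiv_mapD: "pderiv (map_poly D p) = map_poly D (pderiv p)"
  by (rule poly_eqI) (simp add: coeff_pderiv coeff_map_poly D_0 D_of_nat_mult del: of_nat_Suc)

lemma pderiv_Dp: "pderiv (Dp D a p) = Dp D a (pderiv p)"
  by (simp add: Dp_def pderiv_add pderiv_smult pderiv_mapD)

lemma pderiv_Dp_funpow: "pderiv ((Dp D a ^^ j) p) = (Dp D a ^^ j) (pderiv p)"
  by (induction j) (simp_all add: pderiv_Dp)

lemma poly_Dp: "D t = a \<Longrightarrow> poly (Dp D a r) t = D (poly r t)"
  using D_poly_Dp[of r t] by simp

lemma poly_Dp_funpow: "D t = a \<Longrightarrow> poly ((Dp D a ^^ j) q) t = (D ^^ j) (poly q t)"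
  by (induction j) (simp_all add: poly_Dp)

lemma Lpoly_Dp_funpow: "diff_subfield D L \<Longrightarrow> a \<in> L \<Longrightarrow> Lpoly L q \<Longrightarrow> Lpoly L ((Dp D a ^^ j) q)"
  by (induction j) (simp_all add: Lpoly_Dp D_0)

lemma poly_deg1: "degree p \<le> 1 \<Longrightarrow> poly p t = coeff p 0 + coeff p 1 * (t::'a)"
  unfolding poly_altdef[of p t] by (cases "degree p") (auto simp: coeff_eq_0 atMost_Suc)

lemma TL:
  assumes sf: "diff_subfield D L" and C: "constants D \<subseteq> L" and x: "x \<in> L" "D x = 1"
    and t: "t \<notin> L" "D t \<in> L" and y: "y \<in> ratfield L t" and yM: "(D ^^ M) y \<in> L"
  shows "\<exists>c l. c \<in> L \<and> l \<in> L \<and> y = c * t + l \<and> (D ^^ M) c = 0"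
proof -
  obtain p where p: "Lpoly L p" "y = poly p t" using polys_down[OF sf C t y yM] by blast
  define a where "a = D t"
  have aL: "a \<in> L" using t(2) by (simp add: a_def)
  have "poly ((Dp D a ^^ M) p) t = poly [:(D ^^ M) y:] t"
    using poly_Dp_funpow[of t a M p] p(2) by (simp add: a_def)
  then have pM: "(Dp D a ^^ M) p = [:(D ^^ M) y:]"
    by (rule transc_eq[OF sf C t Lpoly_Dp_funpow[OF sf aL p(1)] Lpoly_const[OF sf yM]])
  define c where "c = poly (pderiv p) t"
  have "(D ^^ M) c = poly ((Dp D a ^^ M) (pderiv p)) t"
    unfolding c_def by (rule poly_Dp_funpow[symmetric]) (simp add: a_def)
  also have "\<dots> = 0" unfolding pderiv_Dp_funpow[symmetric] pM by (simp add: pderiv_pCons)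
  finally have cM: "(D ^^ M) c = 0" .
  have cL: "c \<in> L" by (rule const_poly_in[OF sf C x cM])
  have "pderiv p = [:c:]"
    by (rule transc_eq[OF sf C t Lpoly_pderiv[OF sf p(1)] Lpoly_const[OF sf cL]]) (simp add: c_def)
  then have dp: "degree p \<le> 1" and c1: "coeff p 1 = c"
    using degree_pderiv[of p] coeff_pderiv[of p 0] by auto
  have "y = c * t + coeff p 0" using poly_deg1[OF dp, of t] p(2) c1 by simp
  moreover have "coeff p 0 \<in> L" using p(1) by (simp add: Lpoly_def)
  ultimately show ?thesis using cL cM by blast
qed

end


section \<open>Algebraic iterated integrals\<close>

lemma alg_over_mono: "L \<subseteq> L' \<Longrightarrow> alg_over L y \<Longrightarrow> alg_over L' y"
  unfolding alg_over_def Lpoly_def by blast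

lemma alg_over_affine:
  fixes y :: "'a::field_char_0"
  assumes sf: "diff_subfield D L" and alg: "alg_over L y" and ab: "a \<in> L" "b \<in> L" "b \<noteq> 0"
  shows "alg_over L (a + b * y)"
proof -
  obtain p where p: "p \<noteq> 0" "Lpoly L p" "poly p y = 0" using alg by (auto simp: alg_over_def)
  define q where "q = [:- a / b, 1 / b:]"
  have q: "Lpoly L q" unfolding q_def using ab sf
    by (auto intro!: Lpoly_pCons[OF sf] Lpoly_const[OF sf] sf_divide sf_uminus sf_1)
  have dq: "degree q > 0" using ab by (simp add: q_def)
  have "pcompose p q \<noteq> 0" using pcompose_eq_0[OF _ dq] p(1) by blast
  moreover have "Lpoly L (pcompose p q)" by (rule Lpoly_pcompose[OF sf p(2) q])
  moreover have "poly (pcompose p q) (a + b * y) = 0"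
    using p(3) ab(3) by (simp add: poly_pcompose q_def field_simps)
  ultimately show ?thesis unfolding alg_over_def by blast
qed

context der
begin

lemma step1:
  assumes sf: "diff_subfield D L" and C: "constants D \<subseteq> L" and x: "x \<in> L" "D x = 1"
    and yn: "(D ^^ n) y \<in> L" and alg: "alg_over L y"
  shows "y \<in> L"
  using sf C x yn alg
proof (induction n arbitrary: L)
  case 0 then show ?case by simp
next
  case (Suc n L)
  define t where "t = (D ^^ n) y"
  have Dt: "D t \<in> L" using Suc.prems(5) by (simp add: t_def)
  show ?case
  proof (cases "t \<in> L")
    case True
    then show ?thesis using Suc by (simp add: t_def)
  next
    case False
    interpret dsub D L by unfold_locales (rule Suc.prems(1))
    let ?L1 = "ratfield L t"
    have sf1: "diff_subfield D ?L1" by (rule rf_sf[OF Dt])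
    have sub: "L \<subseteq> ?L1" by (rule rf_mono)
    have "y \<in> ?L1"
    proof (rule Suc.IH[OF sf1])
      show "constants D \<subseteq> ?L1" using Suc.prems(2) sub by blast
      show "x \<in> ?L1" "D x = 1" using Suc.prems(3,4) sub by auto
      show "(D ^^ n) y \<in> ?L1" using rf_s by (simp add: t_def)
      show "alg_over ?L1 y" by (rule alg_over_mono[OF sub Suc.prems(6)])
    qed
    then obtain c l where cl: "c \<in> L" "l \<in> L" "y = c * t + l"
      using TL[OF Suc.prems(1-4) False Dt, of y "Suc n"] Suc.prems(5) by blast
    show ?thesis
    proof (cases "c = 0")
      case True
      then show ?thesis using cl by simp
    next
      case False
      have "alg_over L (- l / c + (1 / c) * y)"
        using alg_over_affine[OF Suc.prems(1) Suc.prems(6), of "- l / c" "1 / c"] cl False Suc.prems(1)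
        by (auto intro: sf_divide sf_uminus sf_1)
      moreover have "- l / c + (1 / c) * y = t" using cl False by (simp add: field_simps)
      ultimately have "t \<in> L" using lemmaA[OF Suc.prems(1,2) Dt] by simp
      then show ?thesis using \<open>t \<notin> L\<close> by simp
    qed
  qed
qed

end


lemma ev_coeff: "coeff (poly P [:a:]) j = poly (map_poly (\<lambda>q. coeff q j) P) a"
  by (induction P rule: pCons_induct) (simp_all add: map_poly_pCons)

lemma ev_poly: "poly (poly P [:a:]) b = poly (map_poly (\<lambda>q. poly q b) P) a"
  by (induction P rule: pCons_induct) (simp_all add: map_poly_pCons)

lemma ev_comp:
  "poly (poly (map_poly (\<lambda>q. pcompose q B) P) A) z = poly (map_poly (\<lambda>q. poly q (poly B z)) P) (poly A z)"
  by (induction P rule: pCons_induct) (simp_all add: map_poly_pCons poly_pcompose)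

lemma nonroot_nat:
  fixes p :: "'a::field_char_0 poly"
  assumes "p \<noteq> 0" shows "\<exists>n::nat. poly p (of_nat n) \<noteq> 0"
proof (rule ccontr)
  assume "\<not> ?thesis"
  then have "range (of_nat :: nat \<Rightarrow> 'a) \<subseteq> {x. poly p x = 0}" by auto
  then have "finite (range (of_nat :: nat \<Rightarrow> 'a))" using poly_roots_finite[OF assms] finite_subset by blast
  then have "finite (UNIV :: nat set)" using finite_imageD[of "of_nat :: nat \<Rightarrow> 'a" UNIV] inj_of_nat by blast
  then show False by simp
qed

fun tower :: "('a::field \<Rightarrow> 'a) \<Rightarrow> 'a set \<Rightarrow> 'a \<Rightarrow> nat \<Rightarrow> nat \<Rightarrow> 'a set" where
  "tower D k f m 0 = k"
| "tower D k f m (Suc j) = ratfield (tower D k f m j) ((D ^^ (m - Suc j)) f)"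

context der
begin

lemma iter_mono: "diff_subfield D k \<Longrightarrow> (D ^^ a) z \<in> k \<Longrightarrow> a \<le> b \<Longrightarrow> (D ^^ b) z \<in> k"
proof -
  assume sf: "diff_subfield D k" and a: "(D ^^ a) z \<in> k" and ab: "a \<le> b"
  have "D ^^ b = D ^^ (b - a) \<circ> D ^^ a" using ab funpow_add[of "b - a" a D] by simp
  then have "(D ^^ b) z = (D ^^ (b - a)) ((D ^^ a) z)" by simp
  then show ?thesis using sf_funpow[OF sf a] by simp
qed

lemma iter_diff:
  assumes sf: "diff_subfield D k" and "(D ^^ a) u \<in> k" "(D ^^ b) v \<in> k"
  shows "(D ^^ max a b) (u - v) \<in> k"
proof -
  have "(D ^^ max a b) u \<in> k" "(D ^^ max a b) v \<in> k"
    using iter_mono[OF sf assms(2)] iter_mono[OF sf assms(3)] by auto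
  then show ?thesis using sf_diff[OF sf] D_funpow_add[of "max a b" u "- v"] D_funpow_uminus by simp
qed

lemma iter_mult:
  assumes sf: "diff_subfield D k" and C: "constants D \<subseteq> k" and x: "x \<in> k" "D x = 1"
  shows "(D ^^ M) y = 0 \<Longrightarrow> (D ^^ n) f \<in> k \<Longrightarrow> \<exists>N. (D ^^ N) (y * f) \<in> k"
proof (induction "M + n" arbitrary: M n y f rule: less_induct)
  case less
  show ?case
  proof (cases "M = 0")
    case True
    then have "y = 0" using less.prems by simp
    then show ?thesis using sf_0[OF sf] by (intro exI[of _ 0]) simp
  next
    case M: False
    show ?thesis
    proof (cases "n = 0")
      case True
      have "y \<in> k" by (rule const_poly_in[OF sf C x less.prems(1)])
      then show ?thesis using True less.prems(2) sf_mult[OF sf] by (intro exI[of _ 0]) simp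
    next
      case False
      obtain M' where M': "M = Suc M'" using M by (cases M) auto
      obtain n' where n': "n = Suc n'" using False by (cases n) auto
      have "(D ^^ M') (D y) = 0" using less.prems(1) M' by (simp add: funpow_Suc_right del: funpow.simps)
      then obtain N1 where N1: "(D ^^ N1) (D y * f) \<in> k"
        using less.hyps[of M' n] less.prems(2) M' by auto
      have "(D ^^ n') (D f) \<in> k" using less.prems(2) n' by (simp add: funpow_Suc_right del: funpow.simps)
      then obtain N2 where N2: "(D ^^ N2) (y * D f) \<in> k"
        using less.hyps[of M n'] less.prems(1) n' by auto
      have N2': "(D ^^ N2) (- (y * D f)) \<in> k" using N2 sf_uminus[OF sf] D_funpow_uminus by simp
      have "(D ^^ max N1 N2) (D y * f - - (y * D f)) \<in> k" by (rule iter_diff[OF sf N1 N2'])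
      then have "(D ^^ Suc (max N1 N2)) (y * f) \<in> k"
        by (simp add: funpow_Suc_right D_mult del: funpow.simps)
      then show ?thesis by blast
    qed
  qed
qed

lemma tower_props:
  assumes sf: "diff_subfield D k" and fm: "(D ^^ m) f \<in> k"
  shows "j \<le> m \<Longrightarrow> diff_subfield D (tower D k f m j) \<and> k \<subseteq> tower D k f m j \<and> (D ^^ (m - j)) f \<in> tower D k f m j"
proof (induction j)
  case 0 then show ?case using sf fm by simp
next
  case (Suc j)
  then have IH: "diff_subfield D (tower D k f m j)" "k \<subseteq> tower D k f m j" "(D ^^ (m - j)) f \<in> tower D k f m j"
    by auto
  interpret dsub D "tower D k f m j" by unfold_locales (rule IH(1))
  have mj: "m - j = Suc (m - Suc j)" using Suc.prems by simp
  have Ds: "D ((D ^^ (m - Suc j)) f) \<in> tower D k f m j" using IH(3) mj by simp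
  show ?case using rf_sf[OF Ds] IH(2) rf_mono rf_s by auto
qed

end


context der
begin

lemma main:
  assumes sf: "diff_subfield D k" and C: "constants D \<subseteq> k" and x: "x \<in> k" "D x = 1"
    and fm: "(D ^^ m) f \<in> k" and gn: "(D ^^ n) g \<in> k"
    and P: "P \<noteq> 0" "\<forall>i j. coeff (coeff P i) j \<in> k"
    and ev: "poly (map_poly (\<lambda>q. poly q g) P) f = 0"
  shows "\<exists>u\<in>k. \<exists>v\<in>k. (u \<noteq> 0 \<or> v \<noteq> 0) \<and> u * f + v * g \<in> k"
proof (cases "f \<in> k")
  case True
  then show ?thesis using sf_1[OF sf] sf_0[OF sf] by (intro bexI[of _ 1] bexI[of _ 0]) auto
next
  case fk: False
  show ?thesis
  proof (cases "g \<in> k")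
    case True
    then show ?thesis using sf_1[OF sf] sf_0[OF sf] by (intro bexI[of _ 0] bexI[of _ 1]) auto
  next
    case gk: False
    obtain i0 where "coeff P i0 \<noteq> 0" using P(1) by (metis leading_coeff_0_iff)
    then obtain j0 where ij: "coeff (coeff P i0) j0 \<noteq> 0" by (metis leading_coeff_0_iff)
    define X where "X = map_poly (\<lambda>q. coeff q j0) P"
    have coeffX: "coeff X i = coeff (coeff P i) j0" for i by (simp add: X_def coeff_map_poly)
    have X0: "X \<noteq> 0" using ij coeffX by (metis coeff_0)
    have XL: "Lpoly k X" using P(2) coeffX by (simp add: Lpoly_def)
    have PkL: "Lpoly L (coeff P i)" if "k \<subseteq> L" for L i using P(2) that by (auto simp: Lpoly_def)
    have Yne: "poly P [:a:] \<noteq> 0" if "poly X a \<noteq> 0" for a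
      using that ev_coeff[of P a j0] by (metis X_def coeff_0)
    have m0: "m \<noteq> 0" using fm fk by (cases m) auto
    let ?A = "tower D k f m"
    have A: "diff_subfield D (?A j) \<and> k \<subseteq> ?A j \<and> (D ^^ (m - j)) f \<in> ?A j" if "j \<le> m" for j
      using tower_props[OF sf fm that] .
    have fAm: "f \<in> ?A m" using A[of m] by simp
    define n0 where "n0 = (LEAST j. f \<in> ?A j)"
    have fn0: "f \<in> ?A n0" unfolding n0_def using fAm by (rule LeastI)
    have n0m: "n0 \<le> m" unfolding n0_def using fAm by (rule Least_le)
    have n00: "n0 \<noteq> 0" using fn0 fk by (cases n0) auto
    define j0 where "j0 = n0 - 1"
    have n0j: "n0 = Suc j0" using n00 by (simp add: j0_def)
    have fN: "f \<notin> ?A j0" using not_less_Least[of j0 "\<lambda>j. f \<in> ?A j"] n0j by (simp add: n0_def)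
    define N where "N = ?A j0"
    define s where "s = (D ^^ (m - n0)) f"
    have AN: "diff_subfield D N" "k \<subseteq> N" "(D ^^ (m - j0)) f \<in> N" using A[of j0] n0m n0j by (auto simp: N_def)
    have An0: "?A n0 = ratfield N s" by (simp add: n0j N_def s_def)
    interpret N: dsub D N by unfold_locales (rule AN(1))
    have Ds: "D s \<in> N"
    proof -
      have "m - j0 = Suc (m - n0)" using n0m n0j by simp
      then show ?thesis using AN(3) by (simp add: s_def)
    qed
    have sN: "s \<notin> N"
    proof
      assume "s \<in> N"
      then have "?A n0 \<subseteq> N" using N.rf_sub An0 by simp
      then show False using fn0 fN by (auto simp: N_def)
    qed
    have CN: "constants D \<subseteq> N" using C AN(2) by blast
    have xN: "x \<in> N" using x AN(2) by blast
    have sf0: "diff_subfield D (?A n0)" using A[OF n0m] by simp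
    have kA0: "k \<subseteq> ?A n0" using A[OF n0m] by simp
    obtain c l where cl: "c \<in> N" "l \<in> N" "f = c * s + l" "(D ^^ m) c = 0"
      using TL[OF AN(1) CN xN x(2) sN Ds, of f m] fn0 An0 fm AN(2) by blast
    have ck: "c \<in> k" by (rule const_poly_in[OF sf C x cl(4)])
    have c0: "c \<noteq> 0" using cl fN by (auto simp: N_def)
    have falg: "\<not> alg_over k f"
    proof
      assume "alg_over k f"
      then have "f \<in> k" using step1[OF sf C x fm] by blast
      then show False using fk by simp
    qed
    have Xf: "poly X f \<noteq> 0" using falg X0 XL unfolding alg_over_def by blast
    have "alg_over (?A n0) g"
      unfolding alg_over_def
    proof (intro exI conjI)
      show "poly P [:f:] \<noteq> 0" using Yne[OF Xf] .
      show "Lpoly (?A n0) (poly P [:f:])"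
        using Lpoly2_poly[OF sf0, of P "[:f:]"] PkL[OF kA0] Lpoly_const[OF sf0 fn0] by blast
      show "poly (poly P [:f:]) g = 0" using ev ev_poly by metis
    qed
    then have gA: "g \<in> ?A n0"
      using step1[OF sf0 _ _ x(2), of n g] C kA0 x(1) gn by blast
    obtain c2 l2 where cl2: "c2 \<in> N" "l2 \<in> N" "g = c2 * s + l2" "(D ^^ n) c2 = 0"
      using TL[OF AN(1) CN xN x(2) sN Ds, of g n] gA An0 gn AN(2) by blast
    have c2k: "c2 \<in> k" by (rule const_poly_in[OF sf C x cl2(4)])
    define R where "R = poly (map_poly (\<lambda>q. pcompose q [:l2, c2:]) P) [:l, c:]"
    have RL: "Lpoly N R" unfolding R_def
    proof (rule Lpoly2_poly[OF AN(1)])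
      fix i
      have "Lpoly N [:l2, c2:]" using cl2 by (auto intro!: Lpoly_pCons[OF AN(1)] Lpoly_const[OF AN(1)])
      then show "Lpoly N (coeff (map_poly (\<lambda>q. pcompose q [:l2, c2:]) P) i)"
        using PkL[OF AN(2)] by (simp add: coeff_map_poly Lpoly_pcompose[OF AN(1)])
      show "Lpoly N [:l, c:]" using cl by (auto intro!: Lpoly_pCons[OF AN(1)] Lpoly_const[OF AN(1)])
    qed
    have evR: "poly R z = poly (map_poly (\<lambda>q. poly q (l2 + c2 * z)) P) (l + c * z)" for z
      unfolding R_def ev_comp by (simp add: algebra_simps)
    have "poly R s = 0" using evR[of s] ev cl(3) cl2(3) by (simp add: algebra_simps)
    then have R0: "R = 0" using transc[OF AN(1) CN sN Ds RL] by blast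
    obtain n1 :: nat where n1: "poly X (of_nat n1) \<noteq> 0" using nonroot_nat[OF X0] by blast
    define w0 :: 'a where "w0 = of_nat n1"
    have w0k: "w0 \<in> k" using sf_of_nat[OF sf] by (simp add: w0_def)
    define zz where "zz = (w0 - l) / c"
    have "poly R zz = 0" using R0 by simp
    then have "poly (map_poly (\<lambda>q. poly q (l2 + c2 * zz)) P) w0 = 0"
      using evR[of zz] c0 by (simp add: zz_def)
    then have root: "poly (poly P [:w0:]) (l2 + c2 * zz) = 0" using ev_poly by metis
    have "alg_over k (l2 + c2 * zz)"
      unfolding alg_over_def
    proof (intro exI conjI)
      show "poly P [:w0:] \<noteq> 0" using Yne n1 by (simp add: w0_def)
      show "Lpoly k (poly P [:w0:])"
        using Lpoly2_poly[OF sf, of P "[:w0:]"] PkL[of k] Lpoly_const[OF sf w0k] by blast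
    qed (rule root)
    then have "alg_over k (c2 * w0 + (- c) * (l2 + c2 * zz))"
      by (rule alg_over_affine[OF sf _ sf_mult[OF sf c2k w0k] sf_uminus[OF sf ck]]) (simp add: c0)
    moreover have "c2 * w0 + (- c) * (l2 + c2 * zz) = c2 * f + (- c) * g"
      using c0 cl(3) cl2(3) by (simp add: zz_def field_simps)
    ultimately have lam_alg: "alg_over k (c2 * f + (- c) * g)" by simp
    obtain N1 where N1: "(D ^^ N1) (c2 * f) \<in> k" using iter_mult[OF sf C x cl2(4) fm] by blast
    obtain N2 where N2: "(D ^^ N2) (c * g) \<in> k" using iter_mult[OF sf C x cl(4) gn] by blast
    have "(D ^^ max N1 N2) (c2 * f - c * g) \<in> k" by (rule iter_diff[OF sf N1 N2])
    then have it: "(D ^^ max N1 N2) (c2 * f + (- c) * g) \<in> k" by simp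
    have lamk: "c2 * f + (- c) * g \<in> k" by (rule step1[OF sf C x it lam_alg])
    have mck: "- c \<in> k" by (rule sf_uminus[OF sf ck])
    have "- c \<noteq> 0" using c0 by simp
    then show ?thesis using lamk c2k mck by blast
  qed
qed

end


theorem corollary32:
  fixes D :: "'a::field_char_0 \<Rightarrow> 'a" and k :: "'a set" and f g :: 'a
  assumes "derivation D"
    and "diff_subfield D k"
    and "constants D \<subseteq> k"
    and "alg_closed_set (constants D)"
    and "\<exists>x\<in>k. D x = 1"
    and "iterated_integral D k f"
    and "iterated_integral D k g"
    and "alg_dependent k f g"
  shows "\<exists>u\<in>k. \<exists>v\<in>k. (u \<noteq> 0 \<or> v \<noteq> 0) \<and> u * f + v * g \<in> k"
proof -
  interpret der D by unfold_locales (rule assms(1))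
  obtain x where x: "x \<in> k" "D x = 1" using assms(5) by blast
  obtain m where fm: "(D ^^ m) f \<in> k" using assms(6) by (auto simp: iterated_integral_def)
  obtain n where gn: "(D ^^ n) g \<in> k" using assms(7) by (auto simp: iterated_integral_def)
  obtain P :: "'a poly poly" where P: "P \<noteq> 0" "\<forall>i j. coeff (coeff P i) j \<in> k"
    "poly (map_poly (\<lambda>q. poly q g) P) f = 0"
    using assms(8) by (auto simp: alg_dependent_def)
  show ?thesis by (rule main[OF assms(2,3) x fm gn P])
qed

end
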